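(* Assume (A1), (A2) and (B3) (see context). For fixed $x$, consider $Q$ as an operator acting on functions of $v$. Then: 1. $Q:L^1_\nu(\mathbb{R}^d)\to L^1(\mathbb{R}^d)$ is bounded and conservative: $\int_{\mathbb{R}^d}Q(f)\,\mathrm{d}v=0$ for all $f\in L^1_\nu(\mathbb{R}^d)$. 2. The operator $\frac1\nu Q$ is bounded on $L^2_{\nu F^{-1}}(\mathbb{R}^d)$, $Q$ is dissipative, and for all $f\in L^2_{\nu F^{-1}}(\mathbb{R}^d)$, $$\int_{\mathbb{R}^d}Q(f)f\,\frac{\mathrm{d}v}{F}\le-\frac{1}{2M}\int_{\mathbb{R}^d}|f-\rho F|^2\,\frac{\nu\,\mathrm{d}v}{F},\qquad \rho:=\int_{\mathbb{R}^d}f\,\mathrm{d}v,$$ where $M$ is the constant of (B3).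
   Context: Let $d\ge1$, $\sigma(x,v,v')\ge0$. The collision operator is $Q(f)(x,v):=\int_{\mathbb{R}^d}[\sigma(x,v,v')f(v')-\sigma(x,v',v)f(v)]\,\mathrm{d}v'$, $\nu(x,v):=\int_{\mathbb{R}^d}\sigma(x,v',v)\,\mathrm{d}v'$, $Q^+(f):=\int\sigma(x,v,v')f(v')\,\mathrm{d}v'$. For a weight $\omega$, $L^p_\omega$ is $L^p$ with respect to $\omega\,\mathrm{d}v$. Assumptions: (A1) $\sigma\ge0$ is locally integrable on $\mathbb{R}^{2d}$ in $(v,v')$ for every $x$, and $\nu(x,v)>0$ for all $x,v$. (A2) There is $F\in L^1_\nu(\mathbb{R}^d)$, independent of $x$, with $Q(F)=0$ (so $Q^+(F)=\nu F$), $F>0$ and $\int F\,\mathrm{d}v=1$. (B3) With $\mathrm{b}(x,v,v'):=\sigma(x,v,v')F(v)^{-1}$, $F'=F(v')$, $\nu'=\nu(x,v')$, there is $M>0$ such that for all $x,v$: $\int F'\frac{\nu(x,v)}{\mathrm{b}}\,\mathrm{d}v'+\big(\int\frac{F'}{\nu'}\frac{\mathrm{b}^2}{\nu(x,v)^2}\,\mathrm{d}v'\big)^{1/2}\le M$. *)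

theory Defs
  imports "HOL-Analysis.Analysis"
begin

text \<open>Velocity space R^d is modelled by an arbitrary Euclidean space 'v with Lebesgue measure lborel.
  The cross section is sigma x v v'.\<close>

definition nu :: "('x \<Rightarrow> 'v::euclidean_space \<Rightarrow> 'v \<Rightarrow> real) \<Rightarrow> 'x \<Rightarrow> 'v \<Rightarrow> real" where
  "nu \<sigma> x v = (\<integral>v'. \<sigma> x v' v \<partial>lborel)"

definition Qop :: "('x \<Rightarrow> 'v::euclidean_space \<Rightarrow> 'v \<Rightarrow> real) \<Rightarrow> 'x \<Rightarrow> ('v \<Rightarrow> real) \<Rightarrow> 'v \<Rightarrow> real" where
  "Qop \<sigma> x f v = (\<integral>v'. (\<sigma> x v v' * f v' - \<sigma> x v' v * f v) \<partial>lborel)"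

definition L1w :: "('v::euclidean_space \<Rightarrow> real) \<Rightarrow> ('v \<Rightarrow> real) \<Rightarrow> bool" where
  "L1w w f \<longleftrightarrow> f \<in> borel_measurable lborel \<and> integrable lborel (\<lambda>v. w v * \<bar>f v\<bar>)"

definition L1norm :: "('v::euclidean_space \<Rightarrow> real) \<Rightarrow> ('v \<Rightarrow> real) \<Rightarrow> real" where
  "L1norm w f = (\<integral>v. w v * \<bar>f v\<bar> \<partial>lborel)"

definition L2w :: "('v::euclidean_space \<Rightarrow> real) \<Rightarrow> ('v \<Rightarrow> real) \<Rightarrow> bool" where
  "L2w w f \<longleftrightarrow> f \<in> borel_measurable lborel \<and> integrable lborel (\<lambda>v. w v * (f v)\<^sup>2)"

definition L2norm :: "('v::euclidean_space \<Rightarrow> real) \<Rightarrow> ('v \<Rightarrow> real) \<Rightarrow> real" where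
  "L2norm w f = sqrt (\<integral>v. w v * (f v)\<^sup>2 \<partial>lborel)"

definition locally_integrable2 :: "('v::euclidean_space \<Rightarrow> 'v \<Rightarrow> real) \<Rightarrow> bool" where
  "locally_integrable2 g \<longleftrightarrow>
     (\<forall>K. compact K \<longrightarrow> set_integrable (lborel :: ('v \<times> 'v) measure) K (\<lambda>(v, v'). g v v'))"

definition bfun :: "('x \<Rightarrow> 'v::euclidean_space \<Rightarrow> 'v \<Rightarrow> real) \<Rightarrow> ('v \<Rightarrow> real) \<Rightarrow> 'x \<Rightarrow> 'v \<Rightarrow> 'v \<Rightarrow> real" where
  "bfun \<sigma> F x v v' = \<sigma> x v v' / F v"

text \<open>Assumption (B3) with constant M. The first integral is taken in [0,\<infinity>] with
  c / 0 = \<infinity> for c > 0 (ennreal division), so that vanishing b makes it infinite.\<close>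
definition B3 :: "('x \<Rightarrow> 'v::euclidean_space \<Rightarrow> 'v \<Rightarrow> real) \<Rightarrow> ('v \<Rightarrow> real) \<Rightarrow> real \<Rightarrow> bool" where
  "B3 \<sigma> F M \<longleftrightarrow> (\<forall>x v.
     let I1 = (\<integral>\<^sup>+v'. ennreal (F v' * nu \<sigma> x v) / ennreal (bfun \<sigma> F x v v') \<partial>lborel);
         I2 = (\<integral>\<^sup>+v'. ennreal (F v' / nu \<sigma> x v' * (bfun \<sigma> F x v v')\<^sup>2 / (nu \<sigma> x v)\<^sup>2) \<partial>lborel)
     in I1 < \<infinity> \<and> I2 < \<infinity> \<and> enn2real I1 + sqrt (enn2real I2) \<le> M)"

end

theory Submission
  imports Defs
begin

lemma li_meas:
  fixes g :: "'v::euclidean_space \<Rightarrow> 'v \<Rightarrow> real"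
  assumes "locally_integrable2 g"
  shows "case_prod g \<in> borel_measurable (lborel \<Otimes>\<^sub>M lborel)"
proof -
  define u where "u = (\<lambda>k::nat. \<lambda>z::'v \<times> 'v. indicator (cball 0 (real k)) z *\<^sub>R case_prod g z)"
  have um: "u k \<in> borel_measurable lborel" for k
  proof -
    have "set_integrable (lborel :: ('v \<times> 'v) measure) (cball 0 (real k)) (\<lambda>(v, v'). g v v')"
      using assms unfolding locally_integrable2_def by simp
    thus ?thesis unfolding set_integrable_def u_def by (rule borel_measurable_integrable)
  qed
  have lim: "(\<lambda>k. u k z) \<longlonglongrightarrow> case_prod g z" for z
  proof (rule tendsto_eventually)
    show "\<forall>\<^sub>F k in sequentially. u k z = case_prod g z"
      unfolding eventually_sequentially
    proof (intro exI allI impI)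
      fix k assume "nat \<lceil>norm z\<rceil> \<le> k"
      hence "norm z \<le> real k" by linarith
      thus "u k z = case_prod g z" unfolding u_def by (simp add: dist_norm)
    qed
  qed
  have "case_prod g \<in> borel_measurable (lborel :: ('v \<times> 'v) measure)"
    by (rule borel_measurable_LIMSEQ_real[OF lim um])
  thus ?thesis by (simp add: lborel_prod)
qed

locale kin =
  fixes s :: "'v::euclidean_space \<Rightarrow> 'v \<Rightarrow> real" and n F :: "'v \<Rightarrow> real" and M :: real
  assumes s_nn: "\<And>v v'. 0 \<le> s v v'"
  and s_meas[measurable]: "case_prod s \<in> borel_measurable (lborel \<Otimes>\<^sub>M lborel)"
  and n_int: "\<And>v. integrable lborel (\<lambda>v'. s v' v)"
  and n_def: "\<And>v. n v = (\<integral>v'. s v' v \<partial>lborel)"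
  and n_pos: "\<And>v. n v > 0"
  and F_meas[measurable]: "F \<in> borel_measurable lborel"
  and F_pos: "\<And>v. F v > 0"
  and F_int: "integrable lborel F"
  and F_one: "(\<integral>v. F v \<partial>lborel) = 1"
  and nF_int: "integrable lborel (\<lambda>v. n v * F v)"
  and QF: "\<And>v. (\<integral>v'. (s v v' * F v' - s v' v * F v) \<partial>lborel) = 0"
  and M_pos: "M > 0"
  and I1fin: "\<And>v. (\<integral>\<^sup>+v'. ennreal (F v' * n v) / ennreal (s v v' / F v) \<partial>lborel) < \<infinity>"
  and I2fin: "\<And>v. (\<integral>\<^sup>+v'. ennreal (F v' / n v' * (s v v' / F v)\<^sup>2 / (n v)\<^sup>2) \<partial>lborel) < \<infinity>"
  and IM: "\<And>v. enn2real (\<integral>\<^sup>+v'. ennreal (F v' * n v) / ennreal (s v v' / F v) \<partial>lborel)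
     + sqrt (enn2real (\<integral>\<^sup>+v'. ennreal (F v' / n v' * (s v v' / F v)\<^sup>2 / (n v)\<^sup>2) \<partial>lborel)) \<le> M"
begin

lemma n_meas[measurable]: "n \<in> borel_measurable lborel"
proof -
  have "(\<lambda>v. \<integral>v'. s v' v \<partial>lborel) \<in> borel_measurable lborel" by measurable
  moreover have "n = (\<lambda>v. \<integral>v'. s v' v \<partial>lborel)" using n_def by auto
  ultimately show ?thesis by simp
qed

lemma nn_n: "(\<integral>\<^sup>+v. ennreal (s v v') \<partial>lborel) = ennreal (n v')"
  using n_int[of v'] by (simp add: n_def nn_integral_eq_integral s_nn)

lemma tonelli:
  assumes [measurable]: "g \<in> borel_measurable lborel"
  shows "(\<integral>\<^sup>+v. (\<integral>\<^sup>+v'. ennreal (s v v') * g v' \<partial>lborel) \<partial>lborel) = (\<integral>\<^sup>+v'. ennreal (n v') * g v' \<partial>lborel)"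
proof -
  have "(\<integral>\<^sup>+v. (\<integral>\<^sup>+v'. ennreal (s v v') * g v' \<partial>lborel) \<partial>lborel)
     = (\<integral>\<^sup>+v'. (\<integral>\<^sup>+v. ennreal (s v v') * g v' \<partial>lborel) \<partial>lborel)"
    by (rule lborel_pair.Fubini'[symmetric]) measurable
  also have "\<dots> = (\<integral>\<^sup>+v'. ennreal (n v') * g v' \<partial>lborel)"
    by (rule nn_integral_cong) (simp add: nn_integral_multc nn_n)
  finally show ?thesis .
qed

lemma I2le: "(\<integral>\<^sup>+v'. ennreal (F v' / n v' * (s v v' / F v)\<^sup>2 / (n v)\<^sup>2) \<partial>lborel) \<le> ennreal (M\<^sup>2)"
proof -
  let ?I = "(\<integral>\<^sup>+v'. ennreal (F v' / n v' * (s v v' / F v)\<^sup>2 / (n v)\<^sup>2) \<partial>lborel)"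
  let ?J = "(\<integral>\<^sup>+v'. ennreal (F v' * n v) / ennreal (s v v' / F v) \<partial>lborel)"
  have sq: "sqrt (enn2real ?I) \<le> M" using IM[of v] enn2real_nonneg[of ?J] by linarith
  have "enn2real ?I = (sqrt (enn2real ?I))\<^sup>2" by simp
  also have "\<dots> \<le> M\<^sup>2" by (rule power_mono[OF sq]) simp
  finally have le: "enn2real ?I \<le> M\<^sup>2" .
  have "?I = ennreal (enn2real ?I)" using I2fin[of v] by (simp add: ennreal_enn2real_if)
  also have "\<dots> \<le> ennreal (M\<^sup>2)" by (rule ennreal_leI[OF le])
  finally show ?thesis .
qed

lemma I1le: "(\<integral>\<^sup>+v'. ennreal (F v' * n v) / ennreal (s v v' / F v) \<partial>lborel) \<le> ennreal M"
proof -
  let ?I = "(\<integral>\<^sup>+v'. ennreal (F v' / n v' * (s v v' / F v)\<^sup>2 / (n v)\<^sup>2) \<partial>lborel)"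
  let ?J = "(\<integral>\<^sup>+v'. ennreal (F v' * n v) / ennreal (s v v' / F v) \<partial>lborel)"
  have le: "enn2real ?J \<le> M" using IM[of v] real_sqrt_ge_zero[OF enn2real_nonneg[of ?I]] by linarith
  have "?J = ennreal (enn2real ?J)" using I1fin[of v] by (simp add: ennreal_enn2real_if)
  also have "\<dots> \<le> ennreal M" by (rule ennreal_leI[OF le])
  finally show ?thesis .
qed

lemma CSb:
  assumes g[measurable]: "g \<in> borel_measurable lborel" and gnn: "\<And>v. 0 \<le> g v"
  shows "(\<integral>\<^sup>+v'. ennreal (s v v' * g v') \<partial>lborel)\<^sup>2
     \<le> ennreal (F v ^ 2 * n v ^ 2 * M ^ 2) * (\<integral>\<^sup>+v'. ennreal (n v' / F v' * (g v')\<^sup>2) \<partial>lborel)"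
proof -
  define a where "a = (\<lambda>v'. ennreal (s v v' * sqrt (F v' / n v')))"
  define c where "c = (\<lambda>v'. ennreal (g v' * sqrt (n v' / F v')))"
  have [measurable]: "a \<in> borel_measurable lborel" "c \<in> borel_measurable lborel"
    unfolding a_def c_def by measurable
  have ac: "a v' * c v' = ennreal (s v v' * g v')" for v'
  proof -
    have "sqrt (F v' / n v') * sqrt (n v' / F v') = 1"
      using F_pos[of v'] n_pos[of v'] by (simp add: real_sqrt_mult[symmetric])
    hence h1: "s v v' * sqrt (F v' / n v') * (g v' * sqrt (n v' / F v')) = s v v' * g v'"
      by (metis (no_types, lifting) mult.assoc mult.left_commute mult.right_neutral)
    have h2: "ennreal (s v v' * sqrt (F v' / n v')) * ennreal (g v' * sqrt (n v' / F v'))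
      = ennreal (s v v' * sqrt (F v' / n v') * (g v' * sqrt (n v' / F v')))"
      using F_pos[of v'] n_pos[of v']
      by (intro ennreal_mult[symmetric] mult_nonneg_nonneg) (simp_all add: s_nn gnn less_imp_le)
    show ?thesis unfolding a_def c_def by (simp only: h1 h2)
  qed
  have a2: "(a v')\<^sup>2 = ennreal (F v ^ 2 * n v ^ 2) * ennreal (F v' / n v' * (s v v' / F v)\<^sup>2 / (n v)\<^sup>2)" for v'
  proof -
    have h1: "(s v v' * sqrt (F v' / n v'))\<^sup>2 = F v ^ 2 * n v ^ 2 * (F v' / n v' * (s v v' / F v)\<^sup>2 / (n v)\<^sup>2)"
      using F_pos[of v'] n_pos[of v'] F_pos[of v] n_pos[of v]
      by (simp add: power_mult_distrib field_simps)
    have nn: "0 \<le> s v v' * sqrt (F v' / n v')" "0 \<le> F v' / n v' * (s v v' / F v)\<^sup>2 / (n v)\<^sup>2"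
      using F_pos[of v'] n_pos[of v'] by (simp_all add: s_nn less_imp_le)
    have "(a v')\<^sup>2 = ennreal ((s v v' * sqrt (F v' / n v'))\<^sup>2)"
      unfolding a_def using nn(1) by (simp add: ennreal_power)
    also have "\<dots> = ennreal (F v ^ 2 * n v ^ 2) * ennreal (F v' / n v' * (s v v' / F v)\<^sup>2 / (n v)\<^sup>2)"
      unfolding h1 using nn(2) by (intro ennreal_mult) simp_all
    finally show ?thesis .
  qed
  have c2: "(c v')\<^sup>2 = ennreal (n v' / F v' * (g v')\<^sup>2)" for v'
  proof -
    have "(g v' * sqrt (n v' / F v'))\<^sup>2 = n v' / F v' * (g v')\<^sup>2"
      using F_pos[of v'] n_pos[of v'] by (simp add: power_mult_distrib)
    moreover have "0 \<le> g v' * sqrt (n v' / F v')"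
      using F_pos[of v'] n_pos[of v'] by (simp add: gnn less_imp_le)
    ultimately show ?thesis unfolding c_def
      by (metis ennreal_power)
  qed
  have "(\<integral>\<^sup>+v'. ennreal (s v v' * g v') \<partial>lborel)\<^sup>2 = (\<integral>\<^sup>+v'. a v' * c v' \<partial>lborel)\<^sup>2"
    by (simp add: ac)
  also have "\<dots> \<le> (\<integral>\<^sup>+v'. (a v')\<^sup>2 \<partial>lborel) * (\<integral>\<^sup>+v'. (c v')\<^sup>2 \<partial>lborel)"
    by (rule Cauchy_Schwarz_nn_integral) measurable
  also have "(\<integral>\<^sup>+v'. (a v')\<^sup>2 \<partial>lborel) = ennreal (F v ^ 2 * n v ^ 2) *
      (\<integral>\<^sup>+v'. ennreal (F v' / n v' * (s v v' / F v)\<^sup>2 / (n v)\<^sup>2) \<partial>lborel)"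
    unfolding a2 by (rule nn_integral_cmult) measurable
  also have "\<dots> \<le> ennreal (F v ^ 2 * n v ^ 2) * ennreal (M\<^sup>2)"
    by (rule mult_left_mono[OF I2le]) simp
  also have "\<dots> = ennreal (F v ^ 2 * n v ^ 2 * M ^ 2)"
    by (simp add: ennreal_mult''[symmetric])
  finally show ?thesis unfolding c2 by (simp add: mult_right_mono)
qed

lemma sF_int: "integrable lborel (\<lambda>v'. s v v' * F v')"
proof -
  have "(\<integral>\<^sup>+v'. ennreal (n v' / F v' * (F v')\<^sup>2) \<partial>lborel) = (\<integral>\<^sup>+v'. ennreal (n v' * F v') \<partial>lborel)"
    using F_pos by (intro nn_integral_cong) (simp add: power2_eq_square)
  also have "\<dots> < \<infinity>"
  proof -
    have "(\<integral>\<^sup>+v'. ennreal (n v' * F v') \<partial>lborel) = (\<integral>\<^sup>+v'. ennreal (norm (n v' * F v')) \<partial>lborel)"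
      using F_pos n_pos by (intro nn_integral_cong) (simp add: less_imp_le)
    thus ?thesis using nF_int by (simp add: integrable_iff_bounded)
  qed
  finally have fin: "(\<integral>\<^sup>+v'. ennreal (n v' / F v' * (F v')\<^sup>2) \<partial>lborel) < \<infinity>" .
  have "(\<integral>\<^sup>+v'. ennreal (s v v' * F v') \<partial>lborel)\<^sup>2
     \<le> ennreal (F v ^ 2 * n v ^ 2 * M ^ 2) * (\<integral>\<^sup>+v'. ennreal (n v' / F v' * (F v')\<^sup>2) \<partial>lborel)"
    using CSb[of F v] F_pos by (simp add: less_imp_le)
  also have "\<dots> < \<infinity>" using fin by (simp add: ennreal_mult_less_top)
  finally have "(\<integral>\<^sup>+v'. ennreal (s v v' * F v') \<partial>lborel)\<^sup>2 < \<infinity>" .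
  hence "(\<integral>\<^sup>+v'. ennreal (s v v' * F v') \<partial>lborel) < \<infinity>"
    by (simp add: power_less_top_ennreal)
  thus ?thesis
    by (intro integrableI_nonneg) (auto simp: s_nn F_pos less_imp_le)
qed

lemma QF_nn: "(\<integral>\<^sup>+v'. ennreal (s v v' * F v') \<partial>lborel) = ennreal (n v * F v)"
proof -
  have "(\<integral>v'. (s v v' * F v' - s v' v * F v) \<partial>lborel) = (\<integral>v'. s v v' * F v' \<partial>lborel) - n v * F v"
    using sF_int[of v] n_int[of v] by (simp add: n_def)
  hence "(\<integral>v'. s v v' * F v' \<partial>lborel) = n v * F v" using QF[of v] by simp
  thus ?thesis using sF_int[of v]
    by (simp add: nn_integral_eq_integral s_nn F_pos less_imp_le)
qed

lemma fub:
  assumes f[measurable]: "f \<in> borel_measurable lborel" and fi: "integrable lborel (\<lambda>v. n v * \<bar>f v\<bar>)"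
  shows "integrable (lborel \<Otimes>\<^sub>M lborel) (\<lambda>(v,v'). s v v' * f v')"
    and "AE v in lborel. integrable lborel (\<lambda>v'. s v v' * f v')"
    and "integrable lborel (\<lambda>v. \<integral>v'. s v v' * f v' \<partial>lborel)"
    and "(\<integral>v. (\<integral>v'. s v v' * f v' \<partial>lborel) \<partial>lborel) = (\<integral>v. n v * f v \<partial>lborel)"
proof -
  have "(\<integral>\<^sup>+z. ennreal (norm ((\<lambda>(v,v'). s v v' * f v') z)) \<partial>(lborel \<Otimes>\<^sub>M lborel))
      = (\<integral>\<^sup>+v. (\<integral>\<^sup>+v'. ennreal (norm (s v v' * f v')) \<partial>lborel) \<partial>lborel)"
  proof -
    have "(\<lambda>z. ennreal (norm ((\<lambda>(v,v'). s v v' * f v') z))) \<in> borel_measurable (lborel \<Otimes>\<^sub>M lborel)"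
      by measurable
    from lborel.nn_integral_fst[OF this] show ?thesis by simp
  qed
  also have "\<dots> = (\<integral>\<^sup>+v. (\<integral>\<^sup>+v'. ennreal (s v v') * ennreal \<bar>f v'\<bar> \<partial>lborel) \<partial>lborel)"
    by (intro nn_integral_cong) (simp add: s_nn abs_mult ennreal_mult)
  also have "\<dots> = (\<integral>\<^sup>+v'. ennreal (n v') * ennreal \<bar>f v'\<bar> \<partial>lborel)"
    by (rule tonelli) measurable
  also have "\<dots> = (\<integral>\<^sup>+v'. ennreal (norm (n v' * \<bar>f v'\<bar>)) \<partial>lborel)"
    using n_pos by (intro nn_integral_cong) (simp add: abs_mult ennreal_mult less_imp_le)
  also have "\<dots> < \<infinity>" using fi by (simp add: integrable_iff_bounded)
  finally show pint: "integrable (lborel \<Otimes>\<^sub>M lborel) (\<lambda>(v,v'). s v v' * f v')"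
    by (simp add: integrable_iff_bounded)
  show "AE v in lborel. integrable lborel (\<lambda>v'. s v v' * f v')"
    using lborel_pair.AE_integrable_fst'[OF pint] by simp
  show "integrable lborel (\<lambda>v. \<integral>v'. s v v' * f v' \<partial>lborel)"
    using lborel_pair.integrable_fst'[OF pint] by simp
  have "(\<integral>v'. (\<integral>v. s v v' * f v' \<partial>lborel) \<partial>lborel) = (\<integral>v. (\<integral>v'. s v v' * f v' \<partial>lborel) \<partial>lborel)"
    by (rule lborel_pair.Fubini_integral) (use pint in simp)
  moreover have "(\<integral>v'. (\<integral>v. s v v' * f v' \<partial>lborel) \<partial>lborel) = (\<integral>v'. n v' * f v' \<partial>lborel)"
    by (rule Bochner_Integration.integral_cong) (simp_all add: n_def)
  ultimately show "(\<integral>v. (\<integral>v'. s v v' * f v' \<partial>lborel) \<partial>lborel) = (\<integral>v. n v * f v \<partial>lborel)"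
    by simp
qed

lemma part1:
  assumes f[measurable]: "f \<in> borel_measurable lborel" and fi: "integrable lborel (\<lambda>v. n v * \<bar>f v\<bar>)"
  defines "Q \<equiv> (\<lambda>v. \<integral>v'. (s v v' * f v' - s v' v * f v) \<partial>lborel)"
  shows "integrable lborel Q" "(\<integral>v. \<bar>Q v\<bar> \<partial>lborel) \<le> 2 * (\<integral>v. n v * \<bar>f v\<bar> \<partial>lborel)"
    "(\<integral>v. Q v \<partial>lborel) = 0"
proof -
  have fa: "integrable lborel (\<lambda>v. n v * \<bar>\<bar>f v\<bar>\<bar>)" using fi by simp
  note A = fub[OF f fi] and B = fub[OF borel_measurable_abs[OF f] fa]
  have nf: "integrable lborel (\<lambda>v. n v * f v)"
  proof -
    have "integrable lborel (\<lambda>v. \<bar>n v * f v\<bar>)" using fi n_pos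
      by (simp add: abs_mult less_imp_le)
    thus ?thesis by (subst (asm) integrable_abs_iff) measurable
  qed
  have Qeq: "AE v in lborel. Q v = (\<integral>v'. s v v' * f v' \<partial>lborel) - n v * f v"
    using A(2)
  proof eventually_elim
    case (elim v)
    have i2: "integrable lborel (\<lambda>v'. s v' v * f v)" using n_int[of v] by simp
    show ?case unfolding Q_def using elim i2
      by (subst Bochner_Integration.integral_diff) (simp_all add: n_def)
  qed
  have Qm[measurable]: "Q \<in> borel_measurable lborel" unfolding Q_def by measurable
  show Qi: "integrable lborel Q"
    by (rule integrable_cong_AE_imp[OF Bochner_Integration.integrable_diff[OF A(3) nf] Qm])
       (use Qeq in \<open>auto elim: AE_mp\<close>)
  show "(\<integral>v. Q v \<partial>lborel) = 0"
  proof -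
    have "(\<integral>v. Q v \<partial>lborel) = (\<integral>v. ((\<integral>v'. s v v' * f v' \<partial>lborel) - n v * f v) \<partial>lborel)"
      by (rule integral_cong_AE) (use Qeq in auto)
    also have "\<dots> = 0" using A(3,4) nf by simp
    finally show ?thesis .
  qed
  have bd: "AE v in lborel. \<bar>Q v\<bar> \<le> (\<integral>v'. s v v' * \<bar>f v'\<bar> \<partial>lborel) + n v * \<bar>f v\<bar>"
    using Qeq
  proof eventually_elim
    case (elim v)
    have "\<bar>\<integral>v'. s v v' * f v' \<partial>lborel\<bar> \<le> (\<integral>v'. \<bar>s v v' * f v'\<bar> \<partial>lborel)"
      by (rule integral_abs_bound)
    also have "\<dots> = (\<integral>v'. s v v' * \<bar>f v'\<bar> \<partial>lborel)" by (simp add: abs_mult s_nn)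
    moreover have "\<bar>n v * f v\<bar> = n v * \<bar>f v\<bar>" using n_pos[of v] by (simp add: abs_mult)
    ultimately show ?case using elim abs_triangle_ineq4[of "\<integral>v'. s v v' * f v' \<partial>lborel" "n v * f v"]
      by linarith
  qed
  have "(\<integral>v. \<bar>Q v\<bar> \<partial>lborel) \<le> (\<integral>v. (\<integral>v'. s v v' * \<bar>f v'\<bar> \<partial>lborel) + n v * \<bar>f v\<bar> \<partial>lborel)"
    by (rule integral_mono_AE) (use Qi B(3) fi bd in auto)
  also have "\<dots> = 2 * (\<integral>v. n v * \<bar>f v\<bar> \<partial>lborel)" using B(3,4) fi by simp
  finally show "(\<integral>v. \<bar>Q v\<bar> \<partial>lborel) \<le> 2 * (\<integral>v. n v * \<bar>f v\<bar> \<partial>lborel)" .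
qed

lemma N2_nn:
  assumes f[measurable]: "f \<in> borel_measurable lborel" and fi: "integrable lborel (\<lambda>v. n v / F v * (f v)\<^sup>2)"
  shows "(\<integral>\<^sup>+v. ennreal (n v / F v * (f v)\<^sup>2) \<partial>lborel) = ennreal (\<integral>v. n v / F v * (f v)\<^sup>2 \<partial>lborel)"
  using fi F_pos n_pos by (intro nn_integral_eq_integral) (auto simp: less_imp_le)

lemma sf_bound:
  assumes f[measurable]: "f \<in> borel_measurable lborel" and fi: "integrable lborel (\<lambda>v. n v / F v * (f v)\<^sup>2)"
  shows "integrable lborel (\<lambda>v'. s v v' * \<bar>f v'\<bar>)" "integrable lborel (\<lambda>v'. s v v' * f v')"
    "(\<integral>v'. s v v' * \<bar>f v'\<bar> \<partial>lborel)\<^sup>2 \<le> F v ^ 2 * n v ^ 2 * M ^ 2 * (\<integral>v. n v / F v * (f v)\<^sup>2 \<partial>lborel)"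
proof -
  define N2 where "N2 = (\<integral>v. n v / F v * (f v)\<^sup>2 \<partial>lborel)"
  have N2nn: "0 \<le> N2" unfolding N2_def using F_pos n_pos
    by (intro integral_nonneg_AE) (auto simp: less_imp_le)
  have cs: "(\<integral>\<^sup>+v'. ennreal (s v v' * \<bar>f v'\<bar>) \<partial>lborel)\<^sup>2 \<le> ennreal (F v ^ 2 * n v ^ 2 * M ^ 2) * ennreal N2"
    using CSb[of "\<lambda>v. \<bar>f v\<bar>" v] N2_nn[OF f fi] unfolding N2_def by simp
  also have "\<dots> = ennreal (F v ^ 2 * n v ^ 2 * M ^ 2 * N2)" using N2nn by (simp add: ennreal_mult)
  finally have cs': "(\<integral>\<^sup>+v'. ennreal (s v v' * \<bar>f v'\<bar>) \<partial>lborel)\<^sup>2 \<le> ennreal (F v ^ 2 * n v ^ 2 * M ^ 2 * N2)" .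
  hence "(\<integral>\<^sup>+v'. ennreal (s v v' * \<bar>f v'\<bar>) \<partial>lborel)\<^sup>2 < \<infinity>"
    using le_less_trans by fastforce
  hence fin: "(\<integral>\<^sup>+v'. ennreal (s v v' * \<bar>f v'\<bar>) \<partial>lborel) < \<infinity>"
    by (simp add: power_less_top_ennreal)
  show i1: "integrable lborel (\<lambda>v'. s v v' * \<bar>f v'\<bar>)"
    using fin by (intro integrableI_nonneg) (auto simp: s_nn)
  show "integrable lborel (\<lambda>v'. s v v' * f v')"
    using i1 by (subst integrable_abs_iff[symmetric]) (auto simp: abs_mult s_nn)
  have eq: "(\<integral>\<^sup>+v'. ennreal (s v v' * \<bar>f v'\<bar>) \<partial>lborel) = ennreal (\<integral>v'. s v v' * \<bar>f v'\<bar> \<partial>lborel)"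
    using i1 by (intro nn_integral_eq_integral) (auto simp: s_nn)
  have x0: "0 \<le> (\<integral>v'. s v v' * \<bar>f v'\<bar> \<partial>lborel)" by (intro integral_nonneg_AE) (auto simp: s_nn)
  have "ennreal ((\<integral>v'. s v v' * \<bar>f v'\<bar> \<partial>lborel)\<^sup>2) \<le> ennreal (F v ^ 2 * n v ^ 2 * M ^ 2 * N2)"
    using cs' unfolding eq using x0 by (simp add: ennreal_power)
  thus "(\<integral>v'. s v v' * \<bar>f v'\<bar> \<partial>lborel)\<^sup>2 \<le> F v ^ 2 * n v ^ 2 * M ^ 2 * (\<integral>v. n v / F v * (f v)\<^sup>2 \<partial>lborel)"
    using N2nn unfolding N2_def by (simp add: ennreal_le_iff)
qed

lemma part2a:
  assumes f[measurable]: "f \<in> borel_measurable lborel" and fi: "integrable lborel (\<lambda>v. n v / F v * (f v)\<^sup>2)"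
  defines "Q \<equiv> (\<lambda>v. \<integral>v'. (s v v' * f v' - s v' v * f v) \<partial>lborel)"
  shows "Q \<in> borel_measurable lborel" "\<And>v. Q v = (\<integral>v'. s v v' * f v' \<partial>lborel) - n v * f v"
    "integrable lborel (\<lambda>v. n v / F v * (Q v / n v)\<^sup>2)"
    "(\<integral>v. n v / F v * (Q v / n v)\<^sup>2 \<partial>lborel)
       \<le> (2 * M\<^sup>2 * (\<integral>v. n v * F v \<partial>lborel) + 2) * (\<integral>v. n v / F v * (f v)\<^sup>2 \<partial>lborel)"
proof -
  define N2 where "N2 = (\<integral>v. n v / F v * (f v)\<^sup>2 \<partial>lborel)"
  show Qm[measurable]: "Q \<in> borel_measurable lborel" unfolding Q_def by measurable
  show Qeq: "Q v = (\<integral>v'. s v v' * f v' \<partial>lborel) - n v * f v" for v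
  proof -
    have i2: "integrable lborel (\<lambda>v'. s v' v * f v)" using n_int[of v] by simp
    show ?thesis unfolding Q_def using sf_bound(2)[OF f fi, of v] i2
      by (subst Bochner_Integration.integral_diff) (simp_all add: n_def)
  qed
  have pt: "n v / F v * (Q v / n v)\<^sup>2 \<le> 2 * M\<^sup>2 * N2 * (n v * F v) + 2 * (n v / F v * (f v)\<^sup>2)" for v
  proof -
    define x where "x = (\<integral>v'. s v v' * \<bar>f v'\<bar> \<partial>lborel)"
    have x2: "x\<^sup>2 \<le> F v ^ 2 * n v ^ 2 * M ^ 2 * N2" unfolding x_def N2_def by (rule sf_bound(3)[OF f fi])
    have "\<bar>\<integral>v'. s v v' * f v' \<partial>lborel\<bar> \<le> (\<integral>v'. \<bar>s v v' * f v'\<bar> \<partial>lborel)"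
      by (rule integral_abs_bound)
    also have "\<dots> = x" unfolding x_def by (simp add: abs_mult s_nn)
    finally have "\<bar>\<integral>v'. s v v' * f v' \<partial>lborel\<bar> \<le> x" .
    moreover have "\<bar>n v * f v\<bar> = n v * \<bar>f v\<bar>" using n_pos[of v] by (simp add: abs_mult)
    ultimately have qa: "\<bar>Q v\<bar> \<le> x + n v * \<bar>f v\<bar>"
      unfolding Qeq using abs_triangle_ineq4[of "\<integral>v'. s v v' * f v' \<partial>lborel" "n v * f v"] by linarith
    have "(Q v)\<^sup>2 \<le> (x + n v * \<bar>f v\<bar>)\<^sup>2"
      using qa by (metis abs_ge_zero power2_abs power_mono)
    also have "\<dots> \<le> 2 * x\<^sup>2 + 2 * (n v * \<bar>f v\<bar>)\<^sup>2"
    proof -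
      have "(x + b)\<^sup>2 \<le> 2 * x\<^sup>2 + 2 * b\<^sup>2" for b :: real
      proof -
        have "0 \<le> (x - b)\<^sup>2" by simp
        thus ?thesis by (simp add: power2_eq_square algebra_simps)
      qed
      thus ?thesis .
    qed
    also have "\<dots> \<le> 2 * (F v ^ 2 * n v ^ 2 * M ^ 2 * N2) + 2 * (n v * \<bar>f v\<bar>)\<^sup>2" using x2 by simp
    finally have q2: "(Q v)\<^sup>2 \<le> 2 * (F v ^ 2 * n v ^ 2 * M ^ 2 * N2) + 2 * (n v * \<bar>f v\<bar>)\<^sup>2" .
    have "n v / F v * (Q v / n v)\<^sup>2 = (Q v)\<^sup>2 / (n v * F v)"
      using n_pos[of v] F_pos[of v] by (simp add: field_simps power2_eq_square)
    also have "\<dots> \<le> (2 * (F v ^ 2 * n v ^ 2 * M ^ 2 * N2) + 2 * (n v * \<bar>f v\<bar>)\<^sup>2) / (n v * F v)"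
      using q2 n_pos[of v] F_pos[of v] by (intro divide_right_mono) auto
    also have "\<dots> = 2 * M\<^sup>2 * N2 * (n v * F v) + 2 * (n v / F v * (f v)\<^sup>2)"
      using n_pos[of v] F_pos[of v] by (simp add: field_simps power2_eq_square)
    finally show ?thesis .
  qed
  have bi: "integrable lborel (\<lambda>v. 2 * M\<^sup>2 * N2 * (n v * F v) + 2 * (n v / F v * (f v)\<^sup>2))"
    by (intro Bochner_Integration.integrable_add integrable_mult_right nF_int fi)
  have nn: "0 \<le> n v / F v * (Q v / n v)\<^sup>2" for v using n_pos[of v] F_pos[of v] by simp
  show qi: "integrable lborel (\<lambda>v. n v / F v * (Q v / n v)\<^sup>2)"
  proof (rule Bochner_Integration.integrable_bound[OF bi], measurable, intro AE_I2)
    fix v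
    have "norm (n v / F v * (Q v / n v)\<^sup>2) = n v / F v * (Q v / n v)\<^sup>2"
      using nn[of v] unfolding real_norm_def by (rule abs_of_nonneg)
    also have "\<dots> \<le> norm (2 * M\<^sup>2 * N2 * (n v * F v) + 2 * (n v / F v * (f v)\<^sup>2))"
      unfolding real_norm_def by (rule order_trans[OF pt abs_ge_self])
    finally show "norm (n v / F v * (Q v / n v)\<^sup>2) \<le> norm (2 * M\<^sup>2 * N2 * (n v * F v) + 2 * (n v / F v * (f v)\<^sup>2))" .
  qed
  have "(\<integral>v. n v / F v * (Q v / n v)\<^sup>2 \<partial>lborel)
      \<le> (\<integral>v. 2 * M\<^sup>2 * N2 * (n v * F v) + 2 * (n v / F v * (f v)\<^sup>2) \<partial>lborel)"
    by (rule integral_mono[OF qi bi pt])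
  also have "\<dots> = (\<integral>v. 2 * M\<^sup>2 * N2 * (n v * F v) \<partial>lborel) + (\<integral>v. 2 * (n v / F v * (f v)\<^sup>2) \<partial>lborel)"
    by (intro Bochner_Integration.integral_add integrable_mult_right nF_int fi)
  also have "\<dots> = 2 * M\<^sup>2 * N2 * (\<integral>v. n v * F v \<partial>lborel) + 2 * N2"
    unfolding N2_def by (simp only: integral_mult_right_zero)
  also have "\<dots> = (2 * M\<^sup>2 * (\<integral>v. n v * F v \<partial>lborel) + 2) * N2"
    by (simp add: algebra_simps)
  finally show "(\<integral>v. n v / F v * (Q v / n v)\<^sup>2 \<partial>lborel)
       \<le> (2 * M\<^sup>2 * (\<integral>v. n v * F v \<partial>lborel) + 2) * (\<integral>v. n v / F v * (f v)\<^sup>2 \<partial>lborel)"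
    unfolding N2_def .
qed

lemma QF_int: "(\<integral>v'. s v v' * F v' \<partial>lborel) = n v * F v"
proof -
  have "ennreal (\<integral>v'. s v v' * F v' \<partial>lborel) = ennreal (n v * F v)"
    using QF_nn[of v] sF_int[of v]
    by (subst nn_integral_eq_integral[symmetric]) (auto simp: s_nn F_pos less_imp_le)
  thus ?thesis using n_pos[of v] F_pos[of v]
    by (subst (asm) ennreal_inj) (auto intro!: integral_nonneg_AE simp: s_nn F_pos less_imp_le)
qed

lemma s_pos_ae: "AE v' in lborel. 0 < s v v'"
proof -
  define k where "k = (\<lambda>v'. ennreal (F v' * n v) / ennreal (s v v' / F v))"
  have km: "k \<in> borel_measurable lborel" unfolding k_def by measurable
  have "AE v' in lborel. k v' \<noteq> \<infinity>"
    using nn_integral_PInf_AE[OF km] I1fin[of v] unfolding k_def by auto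
  thus ?thesis
  proof eventually_elim
    case (elim v')
    have "s v v' \<noteq> 0"
    proof
      assume "s v v' = 0"
      hence "k v' = ennreal (F v' * n v) / 0" unfolding k_def by simp
      also have "\<dots> = \<infinity>" using F_pos[of v'] n_pos[of v] by simp
      finally show False using elim by simp
    qed
    thus ?case using s_nn[of v v'] by simp
  qed
qed

lemma CS1:
  assumes h[measurable]: "h \<in> borel_measurable lborel"
    and Gi: "integrable lborel (\<lambda>v'. s v v' * F v' * (h v - h v')\<^sup>2)"
  shows "integrable lborel (\<lambda>v'. F v' * \<bar>h v' - h v\<bar>)"
    "(\<integral>v'. F v' * \<bar>h v' - h v\<bar> \<partial>lborel)\<^sup>2 \<le> M * (\<integral>v'. s v v' * F v' * (h v - h v')\<^sup>2 \<partial>lborel) / (F v * n v)"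
proof -
  define Gv where "Gv = (\<integral>v'. s v v' * F v' * (h v - h v')\<^sup>2 \<partial>lborel)"
  have Gv0: "0 \<le> Gv" unfolding Gv_def
    by (intro integral_nonneg_AE) (auto simp: s_nn F_pos less_imp_le)
  define a where "a = (\<lambda>v'. ennreal (sqrt (F v' * n v / (s v v' / F v))))"
  define c where "c = (\<lambda>v'. ennreal (sqrt ((s v v' / F v) * F v' / n v) * \<bar>h v' - h v\<bar>))"
  have [measurable]: "a \<in> borel_measurable lborel" "c \<in> borel_measurable lborel"
    unfolding a_def c_def by measurable
  have ac: "AE v' in lborel. a v' * c v' = ennreal (F v' * \<bar>h v' - h v\<bar>)"
    using s_pos_ae[of v]
  proof eventually_elim
    case (elim v')
    have p: "0 < F v' * n v / (s v v' / F v)" "0 < (s v v' / F v) * F v' / n v"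
      using elim F_pos[of v'] F_pos[of v] n_pos[of v] by auto
    have "sqrt (F v' * n v / (s v v' / F v)) * sqrt ((s v v' / F v) * F v' / n v) = F v'"
      using elim F_pos[of v'] F_pos[of v] n_pos[of v]
      by (simp add: real_sqrt_mult[symmetric] power2_eq_square[symmetric])
    hence h1: "sqrt (F v' * n v / (s v v' / F v)) * (sqrt ((s v v' / F v) * F v' / n v) * \<bar>h v' - h v\<bar>)
        = F v' * \<bar>h v' - h v\<bar>" by (simp add: mult.assoc[symmetric])
    have h2: "a v' * c v' = ennreal (sqrt (F v' * n v / (s v v' / F v)) * (sqrt ((s v v' / F v) * F v' / n v) * \<bar>h v' - h v\<bar>))"
      unfolding a_def c_def using p by (intro ennreal_mult[symmetric]) auto
    show ?case unfolding h2 h1 ..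
  qed
  have a2: "AE v' in lborel. (a v')\<^sup>2 = ennreal (F v' * n v) / ennreal (s v v' / F v)"
    using s_pos_ae[of v]
  proof eventually_elim
    case (elim v')
    have p: "0 \<le> F v' * n v / (s v v' / F v)" "0 < s v v' / F v"
      using elim F_pos[of v'] F_pos[of v] n_pos[of v] by auto
    have "(a v')\<^sup>2 = ennreal ((sqrt (F v' * n v / (s v v' / F v)))\<^sup>2)"
      unfolding a_def using p by (simp add: ennreal_power)
    also have "\<dots> = ennreal (F v' * n v / (s v v' / F v))" using p by simp
    also have "\<dots> = ennreal (F v' * n v) / ennreal (s v v' / F v)"
      using p F_pos[of v'] n_pos[of v] by (intro divide_ennreal[symmetric]) auto
    finally show ?case .
  qed
  have c2: "(c v')\<^sup>2 = ennreal (s v v' * F v' * (h v - h v')\<^sup>2 / (F v * n v))" for v'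
  proof -
    have p: "0 \<le> sqrt ((s v v' / F v) * F v' / n v) * \<bar>h v' - h v\<bar>"
      using F_pos[of v'] F_pos[of v] n_pos[of v] s_nn[of v v'] by auto
    have "(sqrt ((s v v' / F v) * F v' / n v) * \<bar>h v' - h v\<bar>)\<^sup>2 = s v v' * F v' * (h v - h v')\<^sup>2 / (F v * n v)"
      using F_pos[of v'] F_pos[of v] n_pos[of v] s_nn[of v v']
      by (simp add: power_mult_distrib power2_abs power2_commute)
    thus ?thesis unfolding c_def using p by (metis ennreal_power)
  qed
  have "(\<integral>\<^sup>+v'. ennreal (F v' * \<bar>h v' - h v\<bar>) \<partial>lborel)\<^sup>2 = (\<integral>\<^sup>+v'. a v' * c v' \<partial>lborel)\<^sup>2"
    by (subst nn_integral_cong_AE[OF ac]) simp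
  also have "\<dots> \<le> (\<integral>\<^sup>+v'. (a v')\<^sup>2 \<partial>lborel) * (\<integral>\<^sup>+v'. (c v')\<^sup>2 \<partial>lborel)"
    by (rule Cauchy_Schwarz_nn_integral) measurable
  also have "(\<integral>\<^sup>+v'. (a v')\<^sup>2 \<partial>lborel) = (\<integral>\<^sup>+v'. ennreal (F v' * n v) / ennreal (s v v' / F v) \<partial>lborel)"
    by (rule nn_integral_cong_AE[OF a2])
  also have "(\<integral>\<^sup>+v'. (c v')\<^sup>2 \<partial>lborel) = ennreal (Gv / (F v * n v))"
  proof -
    have "(\<integral>\<^sup>+v'. (c v')\<^sup>2 \<partial>lborel) = (\<integral>\<^sup>+v'. ennreal (s v v' * F v' * (h v - h v')\<^sup>2 / (F v * n v)) \<partial>lborel)"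
      unfolding c2 ..
    also have "\<dots> = ennreal (\<integral>v'. s v v' * F v' * (h v - h v')\<^sup>2 / (F v * n v) \<partial>lborel)"
      using Gi F_pos n_pos s_nn
      by (intro nn_integral_eq_integral) (auto intro!: AE_I2 divide_nonneg_pos mult_nonneg_nonneg simp: less_imp_le)
    also have "(\<integral>v'. s v v' * F v' * (h v - h v')\<^sup>2 / (F v * n v) \<partial>lborel) = Gv / (F v * n v)"
      unfolding Gv_def by simp
    finally show ?thesis .
  qed
  also have "(\<integral>\<^sup>+v'. ennreal (F v' * n v) / ennreal (s v v' / F v) \<partial>lborel) * ennreal (Gv / (F v * n v))
      \<le> ennreal M * ennreal (Gv / (F v * n v))"
    by (rule mult_right_mono[OF I1le]) simp
  also have "\<dots> = ennreal (M * Gv / (F v * n v))"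
    using M_pos Gv0 F_pos[of v] n_pos[of v] by (simp add: ennreal_mult[symmetric])
  finally have cs: "(\<integral>\<^sup>+v'. ennreal (F v' * \<bar>h v' - h v\<bar>) \<partial>lborel)\<^sup>2 \<le> ennreal (M * Gv / (F v * n v))" .
  hence "(\<integral>\<^sup>+v'. ennreal (F v' * \<bar>h v' - h v\<bar>) \<partial>lborel)\<^sup>2 < \<infinity>"
    using le_less_trans by fastforce
  hence fin: "(\<integral>\<^sup>+v'. ennreal (F v' * \<bar>h v' - h v\<bar>) \<partial>lborel) < \<infinity>"
    by (simp add: power_less_top_ennreal)
  show i1: "integrable lborel (\<lambda>v'. F v' * \<bar>h v' - h v\<bar>)"
    using fin F_pos by (intro integrableI_nonneg) (auto simp: less_imp_le)
  have eq: "(\<integral>\<^sup>+v'. ennreal (F v' * \<bar>h v' - h v\<bar>) \<partial>lborel) = ennreal (\<integral>v'. F v' * \<bar>h v' - h v\<bar> \<partial>lborel)"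
    using i1 F_pos by (intro nn_integral_eq_integral) (auto simp: less_imp_le)
  have x0: "0 \<le> (\<integral>v'. F v' * \<bar>h v' - h v\<bar> \<partial>lborel)"
    using F_pos by (intro integral_nonneg_AE) (auto simp: less_imp_le)
  have "ennreal ((\<integral>v'. F v' * \<bar>h v' - h v\<bar> \<partial>lborel)\<^sup>2) \<le> ennreal (M * Gv / (F v * n v))"
    using cs unfolding eq using x0 by (simp add: ennreal_power)
  moreover have "0 \<le> M * Gv / (F v * n v)" using M_pos Gv0 F_pos[of v] n_pos[of v] by simp
  ultimately show "(\<integral>v'. F v' * \<bar>h v' - h v\<bar> \<partial>lborel)\<^sup>2 \<le> M * (\<integral>v'. s v v' * F v' * (h v - h v')\<^sup>2 \<partial>lborel) / (F v * n v)"
    unfolding Gv_def by (simp add: ennreal_le_iff)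
qed

lemma AE_ex:
  assumes "AE v in (lborel :: 'v measure). P v" shows "\<exists>v. P v"
proof (rule ccontr)
  assume "\<not> (\<exists>v. P v)"
  from assms obtain N where N: "{x \<in> space lborel. \<not> P x} \<subseteq> N" "emeasure lborel N = 0" "N \<in> sets lborel"
    by (rule AE_E)
  with \<open>\<not> (\<exists>v. P v)\<close> have "N = UNIV" by auto
  with N(2) show False by simp
qed

lemma part2b:
  assumes f[measurable]: "f \<in> borel_measurable lborel" and fi: "integrable lborel (\<lambda>v. n v / F v * (f v)\<^sup>2)"
  defines "Q \<equiv> (\<lambda>v. \<integral>v'. (s v v' * f v' - s v' v * f v) \<partial>lborel)"
  shows "integrable lborel (\<lambda>v. Q v * f v / F v)"
    "(\<integral>v. Q v * f v / F v \<partial>lborel) \<le> 0"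
    "(\<integral>v. Q v * f v / F v \<partial>lborel) \<le> - (1 / (2 * M)) *
        (\<integral>v. (f v - (\<integral>v. f v \<partial>lborel) * F v)\<^sup>2 * n v / F v \<partial>lborel)"
proof -
  define N2 where "N2 = (\<integral>v. n v / F v * (f v)\<^sup>2 \<partial>lborel)"
  define h where "h = (\<lambda>v. f v / F v)"
  have hm[measurable]: "h \<in> borel_measurable lborel" unfolding h_def by measurable
  have Fh: "F v * h v = f v" for v using F_pos[of v] unfolding h_def by simp
  have Fh2: "F v * (h v)\<^sup>2 = (f v)\<^sup>2 / F v" for v using F_pos[of v] unfolding h_def
    by (simp add: power2_eq_square)
  have nFh2: "n v * F v * (h v)\<^sup>2 = n v / F v * (f v)\<^sup>2" for v using F_pos[of v] unfolding h_def
    by (simp add: power2_eq_square)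
  define A where "A = (\<lambda>v v'. s v v' * F v' * (h v)\<^sup>2)"
  define B where "B = (\<lambda>v v'. s v v' * f v' * h v)"
  define C where "C = (\<lambda>v v'. s v v' * (F v' * (h v')\<^sup>2))"
  define G where "G = (\<lambda>v v'. s v v' * F v' * (h v - h v')\<^sup>2)"
  have [measurable]: "case_prod A \<in> borel_measurable (lborel \<Otimes>\<^sub>M lborel)"
    unfolding A_def by measurable
  have [measurable]: "case_prod B \<in> borel_measurable (lborel \<Otimes>\<^sub>M lborel)"
    unfolding B_def by measurable
  have [measurable]: "case_prod C \<in> borel_measurable (lborel \<Otimes>\<^sub>M lborel)"
    unfolding C_def by measurable
  have [measurable]: "case_prod G \<in> borel_measurable (lborel \<Otimes>\<^sub>M lborel)"
    unfolding G_def by measurable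
  have gC: "integrable lborel (\<lambda>v. n v * \<bar>F v * (h v)\<^sup>2\<bar>)"
  proof -
    have "(\<lambda>v. n v * \<bar>F v * (h v)\<^sup>2\<bar>) = (\<lambda>v. n v / F v * (f v)\<^sup>2)"
      using F_pos nFh2 by (intro ext) (simp add: less_imp_le mult.assoc[symmetric])
    thus ?thesis using fi by simp
  qed
  note fc = fub[of "\<lambda>v. F v * (h v)\<^sup>2", OF _ gC]
  have Cint: "integrable (lborel \<Otimes>\<^sub>M lborel) (case_prod C)"
    using fc(1) unfolding C_def by simp
  have Cval: "integral\<^sup>L (lborel \<Otimes>\<^sub>M lborel) (case_prod C) = N2"
  proof -
    have "integral\<^sup>L (lborel \<Otimes>\<^sub>M lborel) (case_prod C) = (\<integral>v. (\<integral>v'. C v v' \<partial>lborel) \<partial>lborel)"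
      using lborel_pair.integral_fst'[OF Cint] by simp
    also have "\<dots> = (\<integral>v. n v * (F v * (h v)\<^sup>2) \<partial>lborel)" using fc(4) unfolding C_def by simp
    also have "\<dots> = N2" unfolding N2_def using nFh2 by (simp add: mult.assoc)
    finally show ?thesis .
  qed
  have Aint: "integrable (lborel \<Otimes>\<^sub>M lborel) (case_prod A)"
  proof -
    have "(\<integral>\<^sup>+z. ennreal (norm (case_prod A z)) \<partial>(lborel \<Otimes>\<^sub>M lborel))
        = (\<integral>\<^sup>+v. (\<integral>\<^sup>+v'. ennreal (norm (A v v')) \<partial>lborel) \<partial>lborel)"
    proof -
      have "(\<lambda>z. ennreal (norm (case_prod A z))) \<in> borel_measurable (lborel \<Otimes>\<^sub>M lborel)" by measurable
      from lborel.nn_integral_fst[OF this] show ?thesis by simp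
    qed
    also have "\<dots> = (\<integral>\<^sup>+v. (\<integral>\<^sup>+v'. ennreal ((h v)\<^sup>2) * ennreal (s v v' * F v') \<partial>lborel) \<partial>lborel)"
      unfolding A_def using F_pos s_nn
      by (intro nn_integral_cong) (simp add: abs_mult ennreal_mult[symmetric] less_imp_le mult_ac)
    also have "\<dots> = (\<integral>\<^sup>+v. ennreal ((h v)\<^sup>2) * ennreal (n v * F v) \<partial>lborel)"
      by (intro nn_integral_cong) (simp add: nn_integral_cmult QF_nn)
    also have "\<dots> = (\<integral>\<^sup>+v. ennreal (norm (n v / F v * (f v)\<^sup>2)) \<partial>lborel)"
      using F_pos n_pos nFh2
      by (intro nn_integral_cong) (simp add: ennreal_mult[symmetric] less_imp_le mult_ac)
    also have "\<dots> < \<infinity>" using fi by (simp add: integrable_iff_bounded)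
    finally show ?thesis by (simp add: integrable_iff_bounded)
  qed
  have Aval: "integral\<^sup>L (lborel \<Otimes>\<^sub>M lborel) (case_prod A) = N2"
  proof -
    have "integral\<^sup>L (lborel \<Otimes>\<^sub>M lborel) (case_prod A) = (\<integral>v. (\<integral>v'. A v v' \<partial>lborel) \<partial>lborel)"
      using lborel_pair.integral_fst'[OF Aint] by simp
    also have "\<dots> = (\<integral>v. n v / F v * (f v)\<^sup>2 \<partial>lborel)"
    proof (rule Bochner_Integration.integral_cong[OF refl])
      fix v
      have "(\<integral>v'. A v v' \<partial>lborel) = (\<integral>v'. s v v' * F v' \<partial>lborel) * (h v)\<^sup>2"
        unfolding A_def by simp
      also have "\<dots> = n v / F v * (f v)\<^sup>2" using QF_int nFh2 by simp
      finally show "(\<integral>v'. A v v' \<partial>lborel) = n v / F v * (f v)\<^sup>2" .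
    qed
    finally show ?thesis unfolding N2_def .
  qed
  have Bint: "integrable (lborel \<Otimes>\<^sub>M lborel) (case_prod B)"
  proof (rule Bochner_Integration.integrable_bound[OF Bochner_Integration.integrable_add[OF Aint Cint]], measurable, intro AE_I2)
    fix z :: "'v \<times> 'v"
    obtain v v' where z: "z = (v, v')" by (cases z)
    have hh: "\<bar>h v\<bar> * \<bar>h v'\<bar> \<le> (h v)\<^sup>2 + (h v')\<^sup>2"
    proof -
      have "0 \<le> (\<bar>h v\<bar> - \<bar>h v'\<bar>)\<^sup>2" by simp
      hence "2 * (\<bar>h v\<bar> * \<bar>h v'\<bar>) \<le> (h v)\<^sup>2 + (h v')\<^sup>2"
        by (simp add: power2_eq_square algebra_simps)
      moreover have "0 \<le> \<bar>h v\<bar> * \<bar>h v'\<bar>" by simp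
      ultimately show ?thesis by linarith
    qed
    have "norm (B v v') = s v v' * F v' * (\<bar>h v\<bar> * \<bar>h v'\<bar>)"
      unfolding B_def using F_pos[of v'] s_nn[of v v']
      by (simp add: abs_mult mult_ac flip: Fh)
    also have "\<dots> \<le> s v v' * F v' * ((h v)\<^sup>2 + (h v')\<^sup>2)"
      using hh F_pos[of v'] s_nn[of v v'] by (intro mult_left_mono) auto
    also have "\<dots> = A v v' + C v v'" unfolding A_def C_def by (simp add: algebra_simps)
    also have "\<dots> \<le> norm (A v v' + C v v')" by simp
    finally show "norm (case_prod B z) \<le> norm (case_prod A z + case_prod C z)" unfolding z by simp
  qed
  have Geq: "case_prod G = (\<lambda>z. case_prod A z - 2 * case_prod B z + case_prod C z)"
  proof
    fix z :: "'v \<times> 'v"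
    obtain v v' where z: "z = (v, v')" by (cases z)
    show "case_prod G z = case_prod A z - 2 * case_prod B z + case_prod C z"
      unfolding z A_def B_def C_def G_def
      by (simp add: power2_eq_square algebra_simps flip: Fh)
  qed
  have Gint: "integrable (lborel \<Otimes>\<^sub>M lborel) (case_prod G)"
    unfolding Geq using Aint Bint Cint by simp
  define D where "D = integral\<^sup>L (lborel \<Otimes>\<^sub>M lborel) (case_prod G)"
  have DABC: "D = N2 - 2 * integral\<^sup>L (lborel \<Otimes>\<^sub>M lborel) (case_prod B) + N2"
    unfolding D_def Geq using Aint Bint Cint Aval Cval by simp
  have D0: "0 \<le> D" unfolding D_def G_def using F_pos s_nn
    by (intro integral_nonneg_AE) (auto simp: less_imp_le)
  have Dfst: "D = (\<integral>v. (\<integral>v'. G v v' \<partial>lborel) \<partial>lborel)"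
    unfolding D_def using lborel_pair.integral_fst'[OF Gint] by simp
  have Bfst: "integral\<^sup>L (lborel \<Otimes>\<^sub>M lborel) (case_prod B) = (\<integral>v. (\<integral>v'. B v v' \<partial>lborel) \<partial>lborel)"
    using lborel_pair.integral_fst'[OF Bint] by simp
  have Bi1: "integrable lborel (\<lambda>v. \<integral>v'. B v v' \<partial>lborel)"
    using lborel_pair.integrable_fst'[OF Bint] by simp
  have Gi1: "integrable lborel (\<lambda>v. \<integral>v'. G v v' \<partial>lborel)"
    using lborel_pair.integrable_fst'[OF Gint] by simp
  have GAE: "AE v in lborel. integrable lborel (\<lambda>v'. G v v')"
    using lborel_pair.AE_integrable_fst'[OF Gint] by simp
  have Qeq: "Q v = (\<integral>v'. s v v' * f v' \<partial>lborel) - n v * f v" for v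
    unfolding Q_def by (rule part2a(2)[OF f fi])
  have Qh: "Q v * f v / F v = (\<integral>v'. B v v' \<partial>lborel) - n v / F v * (f v)\<^sup>2" for v
  proof -
    have "(\<integral>v'. B v v' \<partial>lborel) = (\<integral>v'. s v v' * f v' \<partial>lborel) * h v"
      unfolding B_def by simp
    thus ?thesis using F_pos[of v] unfolding Qeq h_def by (simp add: field_simps power2_eq_square)
  qed
  show Qhi: "integrable lborel (\<lambda>v. Q v * f v / F v)"
    unfolding Qh using Bi1 fi by simp
  have Qhval: "(\<integral>v. Q v * f v / F v \<partial>lborel) = - D / 2"
  proof -
    have "(\<integral>v. Q v * f v / F v \<partial>lborel) = (\<integral>v. (\<integral>v'. B v v' \<partial>lborel) \<partial>lborel) - N2"
      unfolding Qh N2_def using Bi1 fi by simp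
    thus ?thesis using DABC Bfst by simp
  qed
  show "(\<integral>v. Q v * f v / F v \<partial>lborel) \<le> 0" using Qhval D0 by simp
  obtain v0 where v0: "integrable lborel (\<lambda>v'. G v0 v')" using AE_ex[OF GAE] by blast
  have i0: "integrable lborel (\<lambda>v'. F v' * \<bar>h v' - h v0\<bar>)"
    by (rule CS1(1)[OF hm]) (use v0 in \<open>simp add: G_def\<close>)
  have fint: "integrable lborel f"
  proof (rule Bochner_Integration.integrable_bound[OF Bochner_Integration.integrable_add[OF i0 integrable_mult_right[OF F_int, of "\<bar>h v0\<bar>"]]], measurable, intro AE_I2)
    fix v
    have "norm (f v) = F v * \<bar>h v\<bar>" using F_pos[of v] unfolding h_def by (simp add: abs_mult)
    also have "\<dots> \<le> F v * (\<bar>h v - h v0\<bar> + \<bar>h v0\<bar>)"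
      using F_pos[of v] by (intro mult_left_mono) auto
    also have "\<dots> = F v * \<bar>h v - h v0\<bar> + \<bar>h v0\<bar> * F v" by (simp add: algebra_simps)
    also have "\<dots> \<le> norm (F v * \<bar>h v - h v0\<bar> + \<bar>h v0\<bar> * F v)" by simp
    finally show "norm (f v) \<le> norm (F v * \<bar>h v - h v0\<bar> + \<bar>h v0\<bar> * F v)" .
  qed
  define \<rho> where "\<rho> = (\<integral>v. f v \<partial>lborel)"
  define X where "X = (\<lambda>v. (f v - \<rho> * F v)\<^sup>2 * n v / F v)"
  have Xm[measurable]: "X \<in> borel_measurable lborel" unfolding X_def by measurable
  have X0: "0 \<le> X v" for v unfolding X_def using F_pos[of v] n_pos[of v] by simp
  have Xb: "AE v in lborel. X v \<le> M * (\<integral>v'. G v v' \<partial>lborel)"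
    using GAE
  proof eventually_elim
    case (elim v)
    have Gi: "integrable lborel (\<lambda>v'. s v v' * F v' * (h v - h v')\<^sup>2)" using elim unfolding G_def .
    define y where "y = (\<integral>v'. F v' * \<bar>h v' - h v\<bar> \<partial>lborel)"
    have y2: "y\<^sup>2 \<le> M * (\<integral>v'. G v v' \<partial>lborel) / (F v * n v)"
      unfolding y_def G_def by (rule CS1(2)[OF hm Gi])
    have "h v - \<rho> = (\<integral>v'. F v' * h v \<partial>lborel) - (\<integral>v'. f v' \<partial>lborel)"
      unfolding \<rho>_def using F_one by simp
    also have "\<dots> = (\<integral>v'. F v' * h v - f v' \<partial>lborel)"
      using F_int fint by (simp add: Bochner_Integration.integral_diff)
    finally have "\<bar>h v - \<rho>\<bar> = \<bar>\<integral>v'. F v' * h v - f v' \<partial>lborel\<bar>" by simp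
    also have "\<dots> \<le> (\<integral>v'. \<bar>F v' * h v - f v'\<bar> \<partial>lborel)" by (rule integral_abs_bound)
    also have "\<dots> = y" unfolding y_def
    proof (rule Bochner_Integration.integral_cong[OF refl])
      fix v'
      have "F v' * h v - f v' = F v' * (h v - h v')" using Fh[of v'] by (simp add: algebra_simps)
      thus "\<bar>F v' * h v - f v'\<bar> = F v' * \<bar>h v' - h v\<bar>"
        using F_pos[of v'] by (simp add: abs_mult abs_minus_commute)
    qed
    finally have "\<bar>h v - \<rho>\<bar> \<le> y" .
    hence "(h v - \<rho>)\<^sup>2 \<le> y\<^sup>2"
      by (metis abs_ge_zero power2_abs power_mono)
    with y2 have hr: "(h v - \<rho>)\<^sup>2 \<le> M * (\<integral>v'. G v v' \<partial>lborel) / (F v * n v)" by simp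
    have "X v = F v * n v * (h v - \<rho>)\<^sup>2"
      unfolding X_def h_def using F_pos[of v] by (simp add: field_simps power2_eq_square)
    also have "\<dots> \<le> F v * n v * (M * (\<integral>v'. G v v' \<partial>lborel) / (F v * n v))"
      using hr F_pos[of v] n_pos[of v] by (intro mult_left_mono) auto
    also have "\<dots> = M * (\<integral>v'. G v v' \<partial>lborel)" using F_pos[of v] n_pos[of v] by simp
    finally show ?case .
  qed
  have MGi: "integrable lborel (\<lambda>v. M * (\<integral>v'. G v v' \<partial>lborel))" using Gi1 by simp
  have Xi: "integrable lborel X"
  proof (rule Bochner_Integration.integrable_bound[OF MGi Xm])
    show "AE v in lborel. norm (X v) \<le> norm (M * (\<integral>v'. G v v' \<partial>lborel))"
      using Xb by eventually_elim (use X0 in \<open>auto intro: order_trans[OF _ abs_ge_self]\<close>)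
  qed
  have "(\<integral>v. X v \<partial>lborel) \<le> (\<integral>v. M * (\<integral>v'. G v v' \<partial>lborel) \<partial>lborel)"
    by (rule integral_mono_AE[OF Xi MGi Xb])
  also have "\<dots> = M * D" unfolding Dfst by simp
  finally have XD: "(\<integral>v. X v \<partial>lborel) \<le> M * D" .
  have "(1 / (2 * M)) * (\<integral>v. X v \<partial>lborel) \<le> (1 / (2 * M)) * (M * D)"
    using XD M_pos by (intro mult_left_mono) auto
  also have "\<dots> = D / 2" using M_pos by simp
  finally have "(1 / (2 * M)) * (\<integral>v. X v \<partial>lborel) \<le> D / 2" .
  thus "(\<integral>v. Q v * f v / F v \<partial>lborel) \<le> - (1 / (2 * M)) *
        (\<integral>v. (f v - (\<integral>v. f v \<partial>lborel) * F v)\<^sup>2 * n v / F v \<partial>lborel)"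
    unfolding Qhval X_def \<rho>_def by simp
qed

end

theorem proposition2p1:
  fixes \<sigma> :: "'x \<Rightarrow> 'v::euclidean_space \<Rightarrow> 'v \<Rightarrow> real"
    and F :: "'v \<Rightarrow> real" and M :: real and x :: 'x
  assumes A1_nonneg: "\<And>x v v'. \<sigma> x v v' \<ge> 0"
    and A1_locint: "\<And>x. locally_integrable2 (\<sigma> x)"
    and A1_nu: "\<And>x v. integrable lborel (\<lambda>v'. \<sigma> x v' v) \<and> nu \<sigma> x v > 0"
    and A2_L1: "\<And>x. L1w (nu \<sigma> x) F"
    and A2_eq: "\<And>x v. Qop \<sigma> x F v = 0"
    and A2_pos: "\<And>v. F v > 0"
    and A2_mass: "integrable lborel F" "(\<integral>v. F v \<partial>lborel) = 1"
    and B3_M: "M > 0" "B3 \<sigma> F M"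
  shows
    "(\<exists>C. \<forall>f. L1w (nu \<sigma> x) f \<longrightarrow>
        L1w (\<lambda>_. 1) (Qop \<sigma> x f) \<and> L1norm (\<lambda>_. 1) (Qop \<sigma> x f) \<le> C * L1norm (nu \<sigma> x) f)
     \<and> (\<forall>f. L1w (nu \<sigma> x) f \<longrightarrow> (\<integral>v. Qop \<sigma> x f v \<partial>lborel) = 0)
     \<and> (\<exists>C. \<forall>f. L2w (\<lambda>v. nu \<sigma> x v / F v) f \<longrightarrow>
        L2w (\<lambda>v. nu \<sigma> x v / F v) (\<lambda>v. Qop \<sigma> x f v / nu \<sigma> x v) \<and>
        L2norm (\<lambda>v. nu \<sigma> x v / F v) (\<lambda>v. Qop \<sigma> x f v / nu \<sigma> x v)
          \<le> C * L2norm (\<lambda>v. nu \<sigma> x v / F v) f)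
     \<and> (\<forall>f. L2w (\<lambda>v. nu \<sigma> x v / F v) f \<longrightarrow>
        integrable lborel (\<lambda>v. Qop \<sigma> x f v * f v / F v) \<and>
        (\<integral>v. Qop \<sigma> x f v * f v / F v \<partial>lborel) \<le> 0)
     \<and> (\<forall>f. L2w (\<lambda>v. nu \<sigma> x v / F v) f \<longrightarrow>
        (let \<rho> = (\<integral>v. f v \<partial>lborel) in
          (\<integral>v. Qop \<sigma> x f v * f v / F v \<partial>lborel)
            \<le> - (1 / (2 * M)) * (\<integral>v. (f v - \<rho> * F v)\<^sup>2 * nu \<sigma> x v / F v \<partial>lborel)))"
proof -
  define s where "s = \<sigma> x"
  define n where "n = nu \<sigma> x"
  have L1F: "F \<in> borel_measurable lborel" "integrable lborel (\<lambda>v. nu \<sigma> x v * \<bar>F v\<bar>)"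
    using A2_L1[of x] unfolding L1w_def by auto
  have B3x: "\<And>v. (\<integral>\<^sup>+v'. ennreal (F v' * n v) / ennreal (s v v' / F v) \<partial>lborel) < \<infinity> \<and>
      (\<integral>\<^sup>+v'. ennreal (F v' / n v' * (s v v' / F v)\<^sup>2 / (n v)\<^sup>2) \<partial>lborel) < \<infinity> \<and>
      enn2real (\<integral>\<^sup>+v'. ennreal (F v' * n v) / ennreal (s v v' / F v) \<partial>lborel)
     + sqrt (enn2real (\<integral>\<^sup>+v'. ennreal (F v' / n v' * (s v v' / F v)\<^sup>2 / (n v)\<^sup>2) \<partial>lborel)) \<le> M"
    using B3_M(2) unfolding B3_def bfun_def Let_def s_def n_def by blast
  interpret K: kin s n F M
  proof
    show "\<And>v v'. 0 \<le> s v v'" unfolding s_def by (rule A1_nonneg)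
    show "case_prod s \<in> borel_measurable (lborel \<Otimes>\<^sub>M lborel)" unfolding s_def by (rule li_meas[OF A1_locint])
    show "\<And>v. integrable lborel (\<lambda>v'. s v' v)" unfolding s_def using A1_nu by blast
    show "\<And>v. n v = (\<integral>v'. s v' v \<partial>lborel)" unfolding s_def n_def nu_def ..
    show "\<And>v. n v > 0" unfolding n_def using A1_nu by blast
    show "F \<in> borel_measurable lborel" by (rule L1F(1))
    show "\<And>v. F v > 0" by (rule A2_pos)
    show "integrable lborel F" by (rule A2_mass(1))
    show "(\<integral>v. F v \<partial>lborel) = 1" by (rule A2_mass(2))
    show "integrable lborel (\<lambda>v. n v * F v)" using L1F(2) A2_pos unfolding n_def
      by (simp add: less_imp_le)
    show "\<And>v. (\<integral>v'. (s v v' * F v' - s v' v * F v) \<partial>lborel) = 0"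
      using A2_eq unfolding s_def Qop_def by blast
    show "M > 0" by (rule B3_M(1))
  qed (use B3x in auto)
  have Qs: "Qop \<sigma> x f = (\<lambda>v. \<integral>v'. (s v v' * f v' - s v' v * f v) \<partial>lborel)" for f
    unfolding Qop_def s_def by (rule ext) simp
  have P1: "L1w (\<lambda>_. 1) (Qop \<sigma> x f) \<and> L1norm (\<lambda>_. 1) (Qop \<sigma> x f) \<le> 2 * L1norm (nu \<sigma> x) f
      \<and> (\<integral>v. Qop \<sigma> x f v \<partial>lborel) = 0" if "L1w (nu \<sigma> x) f" for f
  proof -
    have f: "f \<in> borel_measurable lborel" "integrable lborel (\<lambda>v. n v * \<bar>f v\<bar>)"
      using that unfolding L1w_def n_def by auto
    note R = K.part1[OF f]
    have "integrable lborel (\<lambda>v. 1 * \<bar>Qop \<sigma> x f v\<bar>)" unfolding Qs using R(1) by simp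
    moreover have "Qop \<sigma> x f \<in> borel_measurable lborel" unfolding Qs using R(1) by simp
    ultimately show ?thesis unfolding L1w_def L1norm_def using R(2,3) unfolding Qs n_def by simp
  qed
  define K0 where "K0 = 2 * M\<^sup>2 * (\<integral>v. n v * F v \<partial>lborel) + 2"
  have P2: "L2w (\<lambda>v. nu \<sigma> x v / F v) (\<lambda>v. Qop \<sigma> x f v / nu \<sigma> x v) \<and>
        L2norm (\<lambda>v. nu \<sigma> x v / F v) (\<lambda>v. Qop \<sigma> x f v / nu \<sigma> x v)
          \<le> sqrt K0 * L2norm (\<lambda>v. nu \<sigma> x v / F v) f" if "L2w (\<lambda>v. nu \<sigma> x v / F v) f" for f
  proof -
    have f: "f \<in> borel_measurable lborel" "integrable lborel (\<lambda>v. n v / F v * (f v)\<^sup>2)"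
      using that unfolding L2w_def n_def by auto
    note R = K.part2a[OF f]
    have m: "(\<lambda>v. Qop \<sigma> x f v / nu \<sigma> x v) \<in> borel_measurable lborel"
      unfolding Qs n_def[symmetric] using R(1) K.n_meas by measurable
    have "sqrt (\<integral>v. n v / F v * ((\<integral>v'. (s v v' * f v' - s v' v * f v) \<partial>lborel) / n v)\<^sup>2 \<partial>lborel)
        \<le> sqrt (K0 * (\<integral>v. n v / F v * (f v)\<^sup>2 \<partial>lborel))"
      using R(4) unfolding K0_def by (rule real_sqrt_le_mono)
    also have "\<dots> = sqrt K0 * sqrt (\<integral>v. n v / F v * (f v)\<^sup>2 \<partial>lborel)" by (rule real_sqrt_mult)
    finally show ?thesis using R(3) m unfolding L2w_def L2norm_def Qs n_def by simp
  qed
  have P3: "integrable lborel (\<lambda>v. Qop \<sigma> x f v * f v / F v) \<and>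
        (\<integral>v. Qop \<sigma> x f v * f v / F v \<partial>lborel) \<le> 0 \<and>
        (let \<rho> = (\<integral>v. f v \<partial>lborel) in
          (\<integral>v. Qop \<sigma> x f v * f v / F v \<partial>lborel)
            \<le> - (1 / (2 * M)) * (\<integral>v. (f v - \<rho> * F v)\<^sup>2 * nu \<sigma> x v / F v \<partial>lborel))"
    if "L2w (\<lambda>v. nu \<sigma> x v / F v) f" for f
  proof -
    have f: "f \<in> borel_measurable lborel" "integrable lborel (\<lambda>v. n v / F v * (f v)\<^sup>2)"
      using that unfolding L2w_def n_def by auto
    note R = K.part2b[OF f]
    show ?thesis using R unfolding Qs Let_def n_def by simp
  qed
  show ?thesis
    using P1 P2 P3 by blast
qed

end
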